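(* Let $N\ge2$, $J=1$, let $h_0,h_1\in\mathbb{C}^N$ with $\|h_0\|=\|h_1\|=1$ and $h_0^{\sf H}h_1=\sin\tau\,e^{i\phi_z}$, where $\tau\in[0,\pi/2)$ and $\phi_z\in[0,2\pi)$; let $\sigma_0^2,\sigma_1^2,\sigma_n^2>0$ and $c_1=|c_1|e^{i\phi_c}$ with $|c_1|\le\sigma_0\sigma_1$, $\phi_c\in[0,2\pi)$. Then for all $\lambda\ge0$, \[ \mathrm{MSE}(\lambda)=\frac{|\delta_2|^2(\sigma_1^2\cos^2\tau+\sigma_n^2)}{g(\lambda)^2}-\frac{2\sigma_n^2\delta_1\tan\tau}{g(\lambda)}+\sigma_n^2(\tan^2\tau+1), \] where $g(\lambda):=\lambda\cos^2\tau+\sigma_1^2\cos^2\tau+\sigma_n^2$, $\delta_1:=\sigma_n^2\tan\tau-|c_1|\cos\tau\cos(\phi_c+\phi_z)$, $\delta_2:=\sigma_n^2\tan\tau-|c_1|\cos\tau\,e^{i(\phi_c+\phi_z)}$. Moreover: 1. If $\delta_2=0$ (hence $\delta_1=0$), then $\mathrm{MSE}(\lambda)=\sigma_n^2(\tan^2\tau+1)$ for all $\lambda\ge0$. 2. If $\delta_2\neq0$, let $\gamma:=\delta_1\sigma_n^2\tan\tau/|\delta_2|^2$. (a) If $\gamma\le0$ (equivalently $\delta_1\tan\tau\le0$), $\mathrm{MSE}(\lambda)$ is decreasing on $[0,\infty)$ and $\inf_{\lambda\ge0}\mathrm{MSE}(\lambda)=\lim_{\lambda\to\infty}\mathrm{MSE}(\lambda)=J_{\rm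 MSE}(w_{\rm ZF})$. (b) If $\gamma\ge1$, $\mathrm{MSE}(\lambda)$ is increasing on $[0,\infty)$ and minimized at $\lambda=0$. (c) If $\gamma\in(0,1)$, $\mathrm{MSE}$ is minimized over $[0,\infty)$ by $\lambda=\dfrac{\sigma_1^2\cos^2\tau+\sigma_n^2}{\cos^2\tau}\cdot\dfrac{1-\gamma}{\gamma}>0$.
   Context: Complex single-interference model: $y(k)=s_0(k)h_0+s_1(k)h_1+n(k)\in\mathbb{C}^N$, with zero-mean jointly weakly stationary complex signals $s_0,s_1$, $\sigma_j^2:=E|s_j(k)|^2$, $c_1:=E[s_0^*(k)s_1(k)]$, and noise $n(k)\sim\mathcal{CN}(0,\sigma_n^2I)$ uncorrelated with the signals. $R:=E[y(k)y(k)^{\sf H}]$. For $\lambda\ge0$, $R_\lambda:=R+\lambda h_1h_1^{\sf H}$ and the RZF beamformer is $w_{\rm RZF}(\lambda):=R_\lambda^{-1}h_0/(h_0^{\sf H}R_\lambda^{-1}h_0)$. The ZF beamformer is $w_{\rm ZF}:=R^{-1}H(H^{\sf H}R^{-1}H)^{-1}e_1$ with $H:=[h_0\ h_1]$, $e_1:=[1,0]^{\sf T}$. The MSE of $w$ is $J_{\rm MSE}(w):=E|w^{\sf H}y(k)-s_0(k)|^2$, and $\mathrm{MSE}(\lambda):=J_{\rm MSE}(w_{\rm RZF}(\lambda))$. *)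

theory Defs
  imports "HOL-Analysis.Analysis"
begin

text \<open>Complex column vectors in C^N are modelled as complex ^ 'n; N x N matrices as
complex ^ 'n ^ 'n (rows indexed first).\<close>

definition hip :: "complex ^ 'n \<Rightarrow> complex ^ 'n \<Rightarrow> complex" where
  "hip x y = (\<Sum>i\<in>UNIV. cnj (x $ i) * y $ i)"

definition outer :: "complex ^ 'n \<Rightarrow> complex ^ 'm \<Rightarrow> complex ^ 'm ^ 'n" where
  "outer x y = (\<chi> i j. x $ i * cnj (y $ j))"

definition ctrans :: "complex ^ 'm ^ 'n \<Rightarrow> complex ^ 'n ^ 'm" where
  "ctrans A = (\<chi> i j. cnj (A $ j $ i))"

text \<open>Covariance R = E[y y^H] of y = s0 h0 + s1 h1 + n, with E|s_j|^2 = sigma_j^2,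
 c1 = E[s0^* s1] (so E[s1 s0^*] = c1, E[s0 s1^*] = cnj c1), noise covariance sigma_n^2 I.\<close>
definition Rcov :: "real \<Rightarrow> real \<Rightarrow> complex \<Rightarrow> real \<Rightarrow> complex ^ 'n \<Rightarrow> complex ^ 'n
    \<Rightarrow> complex ^ 'n ^ 'n" where
  "Rcov s0 s1 c1 sn h0 h1 =
     (\<chi> i j. complex_of_real (s0\<^sup>2) * outer h0 h0 $ i $ j
          + complex_of_real (s1\<^sup>2) * outer h1 h1 $ i $ j
          + cnj c1 * outer h0 h1 $ i $ j + c1 * outer h1 h0 $ i $ j
          + complex_of_real (sn\<^sup>2) * mat 1 $ i $ j)"

text \<open>Cross-correlation p = E[y s0^*] = sigma_0^2 h0 + c1 h1.\<close>
definition pcross :: "real \<Rightarrow> complex \<Rightarrow> complex ^ 'n \<Rightarrow> complex ^ 'n \<Rightarrow> complex ^ 'n" where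
  "pcross s0 c1 h0 h1 = complex_of_real (s0\<^sup>2) *s h0 + c1 *s h1"

text \<open>J_MSE(w) = E|w^H y - s0|^2 = w^H R w - w^H p - p^H w + sigma_0^2 (a real number).\<close>
definition J_MSE :: "real \<Rightarrow> real \<Rightarrow> complex \<Rightarrow> real \<Rightarrow> complex ^ 'n \<Rightarrow> complex ^ 'n
    \<Rightarrow> complex ^ 'n \<Rightarrow> real" where
  "J_MSE s0 s1 c1 sn h0 h1 w =
     Re (hip w (Rcov s0 s1 c1 sn h0 h1 *v w) - hip w (pcross s0 c1 h0 h1)
         - hip (pcross s0 c1 h0 h1) w + complex_of_real (s0\<^sup>2))"

definition w_RZF :: "real \<Rightarrow> real \<Rightarrow> complex \<Rightarrow> real \<Rightarrow> complex ^ 'n \<Rightarrow> complex ^ 'n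
    \<Rightarrow> real \<Rightarrow> complex ^ 'n" where
  "w_RZF s0 s1 c1 sn h0 h1 lam =
     (let Rl = Rcov s0 s1 c1 sn h0 h1 + (\<chi> i j. complex_of_real lam * outer h1 h1 $ i $ j);
          v = matrix_inv Rl *v h0
      in inverse (hip h0 v) *s v)"

definition Hmat :: "complex ^ 'n \<Rightarrow> complex ^ 'n \<Rightarrow> complex ^ 2 ^ 'n" where
  "Hmat h0 h1 = (\<chi> i k. if k = 1 then h0 $ i else h1 $ i)"

definition e1 :: "complex ^ 2" where
  "e1 = (\<chi> k. if k = 1 then 1 else 0)"

definition w_ZF :: "real \<Rightarrow> real \<Rightarrow> complex \<Rightarrow> real \<Rightarrow> complex ^ 'n \<Rightarrow> complex ^ 'n
    \<Rightarrow> complex ^ 'n" where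
  "w_ZF s0 s1 c1 sn h0 h1 =
     (let Ri = matrix_inv (Rcov s0 s1 c1 sn h0 h1); H = Hmat h0 h1
      in (Ri ** H ** matrix_inv (ctrans H ** Ri ** H)) *v e1)"

definition MSE :: "real \<Rightarrow> real \<Rightarrow> complex \<Rightarrow> real \<Rightarrow> complex ^ 'n \<Rightarrow> complex ^ 'n
    \<Rightarrow> real \<Rightarrow> real" where
  "MSE s0 s1 c1 sn h0 h1 lam = J_MSE s0 s1 c1 sn h0 h1 (w_RZF s0 s1 c1 sn h0 h1 lam)"

end

theory Submission
  imports Defs
begin


lemma hip_cnj: "cnj (hip x y) = hip y x"
  by (simp add: hip_def mult.commute)

lemma hip_scale_r: "hip x (a *s y) = a * hip x y"
  by (simp add: hip_def sum_distrib_left algebra_simps)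
lemma hip_scale_l: "hip (a *s x) y = cnj a * hip x y"
  by (simp add: hip_def sum_distrib_left algebra_simps)
lemma hip_add_r: "hip x (y + z) = hip x y + hip x z"
  by (simp add: hip_def sum.distrib algebra_simps)
lemma hip_add_l: "hip (x + y) z = hip x z + hip y z"
  by (simp add: hip_def sum.distrib algebra_simps)
lemma hip_zero_r: "hip x 0 = 0" by (simp add: hip_def)

lemma hip_self: "hip x x = complex_of_real ((norm x)\<^sup>2)"
proof -
  have "hip x x = (\<Sum>i\<in>UNIV. complex_of_real ((norm (x$i))\<^sup>2))"
    unfolding hip_def by (intro sum.cong refl) (metis complex_norm_square mult.commute)
  also have "\<dots> = complex_of_real (\<Sum>i\<in>UNIV. (norm (x$i))\<^sup>2)" by simp
  also have "(\<Sum>i\<in>UNIV. (norm (x$i))\<^sup>2) = (norm x)\<^sup>2"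
    by (simp add: norm_vec_def L2_set_def sum_nonneg)
  finally show ?thesis .
qed

lemma outer_mult: "(\<chi> i j. a * outer x y $ i $ j) *v z = (a * hip y z) *s x"
  by (simp add: vec_eq_iff matrix_vector_mult_def outer_def hip_def sum_distrib_left algebra_simps)

lemma Rcov_mult: "Rcov s0 s1 c1 sn h0 h1 *v y =
   (complex_of_real (s0\<^sup>2) * hip h0 y + cnj c1 * hip h1 y) *s h0
 + (complex_of_real (s1\<^sup>2) * hip h1 y + c1 * hip h0 y) *s h1
 + complex_of_real (sn\<^sup>2) *s y"
proof -
  have e: "Rcov s0 s1 c1 sn h0 h1 = (\<chi> i j. complex_of_real (s0\<^sup>2) * outer h0 h0 $ i $ j)
     + (\<chi> i j. complex_of_real (s1\<^sup>2) * outer h1 h1 $ i $ j)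
     + (\<chi> i j. cnj c1 * outer h0 h1 $ i $ j) + (\<chi> i j. c1 * outer h1 h0 $ i $ j)
     + (\<chi> i j. complex_of_real (sn\<^sup>2) * mat 1 $ i $ j)"
    by (simp add: vec_eq_iff Rcov_def)
  have m: "(\<chi> i j. a * mat 1 $ i $ j) *v z = a *s z" for a :: complex and z :: "complex^'n"
  proof -
    have "(\<chi> i j. a * mat 1 $ i $ j) = (\<chi> i j. if i = j then a else (0::complex))"
      by (simp add: vec_eq_iff mat_def)
    moreover have "(\<chi> i j. if i = j then a else (0::complex)) *v z = a *s z"
      unfolding matrix_vector_mult_def by (simp add: vec_eq_iff if_distrib[of "\<lambda>x. x * _"] cong: if_cong)
    ultimately show ?thesis by metis
  qed
  show ?thesis unfolding e matrix_vector_mult_add_rdistrib outer_mult m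
    by (simp add: vector_sadd_rdistrib algebra_simps)
qed

lemma Rl_mult: "(Rcov s0 s1 c1 sn h0 h1 + (\<chi> i j. complex_of_real l * outer h1 h1 $ i $ j)) *v y =
   (complex_of_real (s0\<^sup>2) * hip h0 y + cnj c1 * hip h1 y) *s h0
 + (complex_of_real (s1\<^sup>2 + l) * hip h1 y + c1 * hip h0 y) *s h1
 + complex_of_real (sn\<^sup>2) *s y"
  unfolding matrix_vector_mult_add_rdistrib outer_mult Rcov_mult
  by (simp add: vector_sadd_rdistrib algebra_simps)

lemma Rl_pos:
  fixes y h0 h1 :: "complex^'n"
  assumes "cmod c1 \<le> s0 * s1" "0 \<le> l" "s0 > 0" "s1 > 0"
  shows "sn\<^sup>2 * (norm y)\<^sup>2 \<le> Re (hip y ((Rcov s0 s1 c1 sn h0 h1 + (\<chi> i j. complex_of_real l * outer h1 h1 $ i $ j)) *v y))"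
proof -
  define a where "a = hip h0 y"
  define b where "b = hip h1 y"
  define z where "z = c1 * a * cnj b"
  have ya: "hip y h0 = cnj a" "hip y h1 = cnj b" unfolding a_def b_def by (simp_all add: hip_cnj)
  have "hip y ((Rcov s0 s1 c1 sn h0 h1 + (\<chi> i j. complex_of_real l * outer h1 h1 $ i $ j)) *v y)
     = complex_of_real (s0\<^sup>2) * (a * cnj a) + complex_of_real (s1\<^sup>2 + l) * (b * cnj b)
       + complex_of_real (sn\<^sup>2) * hip y y + (z + cnj z)"
    unfolding Rl_mult hip_add_r hip_scale_r ya z_def by (simp add: a_def b_def algebra_simps)
  also have "\<dots> = complex_of_real (s0\<^sup>2 * (cmod a)\<^sup>2 + (s1\<^sup>2 + l) * (cmod b)\<^sup>2 + sn\<^sup>2 * (norm y)\<^sup>2)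
       + (z + cnj z)"
    by (simp add: hip_self complex_norm_square[symmetric])
  finally have e: "Re (hip y ((Rcov s0 s1 c1 sn h0 h1 + (\<chi> i j. complex_of_real l * outer h1 h1 $ i $ j)) *v y))
     = s0\<^sup>2 * (cmod a)\<^sup>2 + (s1\<^sup>2 + l) * (cmod b)\<^sup>2 + sn\<^sup>2 * (norm y)\<^sup>2 + 2 * Re z"
    by simp
  have "- cmod z \<le> Re z" using abs_Re_le_cmod[of z] by linarith
  moreover have "cmod z = cmod c1 * cmod a * cmod b" by (simp add: z_def norm_mult)
  moreover have "cmod c1 * cmod a * cmod b \<le> s0 * s1 * cmod a * cmod b"
    using assms(1) by (simp add: mult_right_mono)
  moreover have "0 \<le> (s0 * cmod a - s1 * cmod b)\<^sup>2" by simp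
  moreover have "0 \<le> l * (cmod b)\<^sup>2" using assms(2) by simp
  ultimately show ?thesis unfolding e by (simp add: power2_eq_square algebra_simps)
qed

lemma Rl_inj:
  fixes y h0 h1 :: "complex^'n"
  assumes "cmod c1 \<le> s0 * s1" "0 \<le> l" "s0 > 0" "s1 > 0" "sn > 0"
    and "Re (hip y ((Rcov s0 s1 c1 sn h0 h1 + (\<chi> i j. complex_of_real l * outer h1 h1 $ i $ j)) *v y)) \<le> 0"
  shows "y = 0"
proof -
  have "sn\<^sup>2 * (norm y)\<^sup>2 \<le> 0" using Rl_pos[OF assms(1-4), of sn y h0 h1] assms(6) by linarith
  moreover have "sn\<^sup>2 > 0" using assms(5) by simp
  ultimately have "(norm y)\<^sup>2 \<le> 0" by (simp add: mult_le_0_iff)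
  then show ?thesis by simp
qed

lemma matrix_inv_solve:
  fixes A :: "'a::field^'n^'n"
  assumes inj: "\<And>x. A *v x = 0 \<Longrightarrow> x = 0" and eq: "A *v w = b"
  shows "matrix_inv A *v b = w"
proof -
  have "\<exists>B. B ** A = mat 1" using inj matrix_left_invertible_ker by blast
  then have "invertible A" using invertible_left_inverse by blast
  then have "\<exists>A'. A ** A' = mat 1 \<and> A' ** A = mat 1" unfolding invertible_def .
  then have "A ** matrix_inv A = mat 1 \<and> matrix_inv A ** A = mat 1"
    unfolding matrix_inv_def by (rule someI_ex)
  then show ?thesis using eq by (metis matrix_vector_mul_assoc matrix_vector_mul_lid)
qed

lemma J_formula:
  assumes "hip h0 w = 1"
  shows "J_MSE s0 s1 c1 sn h0 h1 w = s1\<^sup>2 * (cmod (hip h1 w))\<^sup>2 + sn\<^sup>2 * (norm w)\<^sup>2"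
proof -
  define b where "b = hip h1 w"
  have wa: "hip w h0 = 1" "hip w h1 = cnj b" using assms unfolding b_def by (metis complex_cnj_one hip_cnj)+
  have "hip w (Rcov s0 s1 c1 sn h0 h1 *v w) - hip w (pcross s0 c1 h0 h1)
         - hip (pcross s0 c1 h0 h1) w + complex_of_real (s0\<^sup>2)
       = complex_of_real (s1\<^sup>2) * (b * cnj b) + complex_of_real (sn\<^sup>2) * hip w w"
    unfolding Rcov_mult pcross_def hip_add_r hip_add_l hip_scale_r hip_scale_l wa assms b_def[symmetric]
    by (simp add: algebra_simps)
  also have "\<dots> = complex_of_real (s1\<^sup>2 * (cmod b)\<^sup>2 + sn\<^sup>2 * (norm w)\<^sup>2)"
    by (simp add: hip_self complex_norm_square[symmetric])
  finally show ?thesis unfolding J_MSE_def b_def by simp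
qed

lemma mv_scale: "(A::complex^'n^'m) *v (c *s x) = c *s (A *v x)"
  by (simp add: vec_eq_iff matrix_vector_mult_def sum_distrib_left algebra_simps)

lemma RZF_eq:
  fixes h0 h1 :: "complex^'n"
  assumes n0: "norm h0 = 1" and n1: "norm h1 = 1" and c1b: "cmod c1 \<le> s0 * s1" and l: "0 \<le> l"
    and pos: "s0 > 0" "s1 > 0" "sn > 0"
    and rho: "\<rho> = hip h0 h1" and c2: "c2 = 1 - (cmod \<rho>)\<^sup>2" "c2 > 0"
    and x: "x = - (complex_of_real (s1\<^sup>2 + l) * cnj \<rho> + c1) / complex_of_real ((s1\<^sup>2 + l) * c2 + sn\<^sup>2)"
  shows "w_RZF s0 s1 c1 sn h0 h1 l = (1 - x * \<rho>) *s h0 + x *s h1"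
    and "MSE s0 s1 c1 sn h0 h1 l = s1\<^sup>2 * (cmod (cnj \<rho> + x * complex_of_real c2))\<^sup>2
                                 + sn\<^sup>2 * (1 + (cmod x)\<^sup>2 * c2)"
proof -
  define s where "s = s1\<^sup>2 + l"
  define g where "g = s * c2 + sn\<^sup>2"
  have gpos: "g > 0" unfolding g_def s_def using c2 l pos by (simp add: add_nonneg_pos)
  define w where "w = (1 - x * \<rho>) *s h0 + x *s h1"
  define Rl where "Rl = Rcov s0 s1 c1 sn h0 h1 + (\<chi> i j. complex_of_real l * outer h1 h1 $ i $ j)"
  have h00: "hip h0 h0 = 1" "hip h1 h1 = 1" using n0 n1 by (simp_all add: hip_self)
  have h10: "hip h1 h0 = cnj \<rho>" using rho by (simp add: hip_cnj)
  have rr: "cnj \<rho> * \<rho> = complex_of_real (1 - c2)"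
  proof -
    have "cnj \<rho> * \<rho> = complex_of_real ((cmod \<rho>)\<^sup>2)" by (metis complex_norm_square mult.commute)
    then show ?thesis using c2(1) by simp
  qed
  have hw0: "hip h0 w = 1" unfolding w_def hip_add_r hip_scale_r h00 rho[symmetric] by simp
  define b where "b = hip h1 w"
  have hb: "b = cnj \<rho> + x * complex_of_real c2"
  proof -
    have "b = (1 - x * \<rho>) * cnj \<rho> + x"
      unfolding b_def w_def hip_add_r hip_scale_r h00 h10 by simp
    also have "\<dots> = cnj \<rho> + x * (1 - cnj \<rho> * \<rho>)" by (simp add: algebra_simps)
    also have "\<dots> = cnj \<rho> + x * complex_of_real c2" unfolding rr by simp
    finally show ?thesis .
  qed
  have coef: "complex_of_real s * b + c1 + complex_of_real (sn\<^sup>2) * x = 0"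
  proof -
    have "complex_of_real g \<noteq> 0" using gpos by simp
    moreover have "x = - (complex_of_real s * cnj \<rho> + c1) / complex_of_real g"
      using x unfolding s_def g_def by simp
    ultimately show ?thesis unfolding hb g_def by (simp add: field_simps)
  qed
  then have c1e: "c1 = - (complex_of_real s * b) - complex_of_real (sn\<^sup>2) * x"
    by (simp add: algebra_simps eq_neg_iff_add_eq_0)
  define \<kappa> where "\<kappa> = complex_of_real (s0\<^sup>2) + cnj c1 * b + complex_of_real (sn\<^sup>2) * (1 - x * \<rho>)"
  have Rw: "Rl *v w = \<kappa> *s h0"
  proof -
    have "Rl *v w = (complex_of_real (s0\<^sup>2) + cnj c1 * b) *s h0
      + (complex_of_real s * b + c1) *s h1 + complex_of_real (sn\<^sup>2) *s w"
      unfolding Rl_def Rl_mult hw0 b_def[symmetric] s_def by simp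
    also have "\<dots> = \<kappa> *s h0"
      unfolding \<kappa>_def w_def
      by (subst (2) c1e) (simp add: vec_eq_iff algebra_simps)
    finally show ?thesis .
  qed
  have inj: "y = 0" if "Rl *v y = 0" for y
    using Rl_inj[OF c1b l pos, of y h0 h1] that unfolding Rl_def[symmetric] by (simp add: hip_zero_r)
  have knz: "\<kappa> \<noteq> 0"
  proof
    assume "\<kappa> = 0"
    then have "w = 0" using Rw inj by simp
    then show False using hw0 by (simp add: hip_zero_r)
  qed
  have "Rl *v (inverse \<kappa> *s w) = h0" using knz by (simp add: mv_scale Rw)
  then have mi: "matrix_inv Rl *v h0 = inverse \<kappa> *s w"
    using matrix_inv_solve[of Rl] inj by blast
  show wr: "w_RZF s0 s1 c1 sn h0 h1 l = (1 - x * \<rho>) *s h0 + x *s h1"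
    unfolding w_RZF_def Let_def Rl_def[symmetric] mi hip_scale_r hw0 w_def[symmetric]
    using knz by simp
  have "complex_of_real ((norm w)\<^sup>2) = hip w w" by (simp add: hip_self)
  also have "\<dots> = cnj (1 - x * \<rho>) + cnj x * b"
  proof -
    have "hip v w = cnj (1 - x * \<rho>) * hip h0 w + cnj x * hip h1 w"
      if "v = (1 - x * \<rho>) *s h0 + x *s h1" for v using that by (simp only: hip_add_l hip_scale_l)
    from this[OF w_def] show ?thesis unfolding hw0 b_def by simp
  qed
  also have "\<dots> = complex_of_real (1 + (cmod x)\<^sup>2 * c2)"
    unfolding hb using complex_norm_square[of x] by (simp add: algebra_simps)
  finally have nw: "(norm w)\<^sup>2 = 1 + (cmod x)\<^sup>2 * c2" using of_real_eq_iff by blast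
  show "MSE s0 s1 c1 sn h0 h1 l = s1\<^sup>2 * (cmod (cnj \<rho> + x * complex_of_real c2))\<^sup>2
                                 + sn\<^sup>2 * (1 + (cmod x)\<^sup>2 * c2)"
    unfolding MSE_def wr w_def[symmetric] J_formula[OF hw0] b_def[symmetric] hb nw ..
qed

lemma inv_props:
  fixes A :: "'a::field^'n^'n"
  assumes inj: "\<And>x. A *v x = 0 \<Longrightarrow> x = 0"
  shows "A ** matrix_inv A = mat 1 \<and> matrix_inv A ** A = mat 1"
proof -
  have "\<exists>B. B ** A = mat 1" using inj matrix_left_invertible_ker by blast
  then have "invertible A" using invertible_left_inverse by blast
  then have "\<exists>A'. A ** A' = mat 1 \<and> A' ** A = mat 1" unfolding invertible_def .
  then show ?thesis
    unfolding matrix_inv_def by (rule someI_ex)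
qed

lemma H_mult: "Hmat h0 h1 *v u = u$1 *s h0 + u$2 *s h1"
  by (simp add: vec_eq_iff matrix_vector_mult_def Hmat_def sum_2 mult.commute)

lemma HH_mult: "(ctrans (Hmat h0 h1) *v y) $ k = (if k = 1 then hip h0 y else hip h1 y)"
  by (simp add: matrix_vector_mult_def Hmat_def ctrans_def hip_def)

lemma ZF_val:
  fixes h0 h1 :: "complex^'n"
  assumes n0: "norm h0 = 1" and n1: "norm h1 = 1" and c1b: "cmod c1 \<le> s0 * s1"
    and pos: "s0 > 0" "s1 > 0" "sn > 0"
    and rho: "\<rho> = hip h0 h1" and c2: "c2 = 1 - (cmod \<rho>)\<^sup>2" "c2 > 0"
  shows "J_MSE s0 s1 c1 sn h0 h1 (w_ZF s0 s1 c1 sn h0 h1) = sn\<^sup>2 / c2"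
proof -
  define R where "R = Rcov s0 s1 c1 sn h0 h1"
  define Ri where "Ri = matrix_inv R"
  define H where "H = Hmat h0 h1"
  define A where "A = ctrans H ** Ri ** H"
  have h00: "hip h0 h0 = 1" "hip h1 h1 = 1" using n0 n1 by (simp_all add: hip_self)
  have h10: "hip h1 h0 = cnj \<rho>" using rho by (simp add: hip_cnj)
  have rr: "cnj \<rho> * \<rho> = complex_of_real (1 - c2)"
  proof -
    have "cnj \<rho> * \<rho> = complex_of_real ((cmod \<rho>)\<^sup>2)" by (metis complex_norm_square mult.commute)
    then show ?thesis using c2(1) by simp
  qed
  have R0: "R = Rcov s0 s1 c1 sn h0 h1 + (\<chi> i j. complex_of_real 0 * outer h1 h1 $ i $ j)"
    unfolding R_def by (simp add: vec_eq_iff)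
  have Rinj: "y = 0" if "Re (hip y (R *v y)) \<le> 0" for y
    using Rl_inj[OF c1b _ pos, of 0 y h0 h1] that unfolding R0 by simp
  have RRi: "R ** Ri = mat 1" "Ri ** R = mat 1"
    using inv_props[of R] Rinj unfolding Ri_def by (auto simp: hip_zero_r)
  have RRiv: "R *v (Ri *v z) = z" for z by (simp add: matrix_vector_mul_assoc RRi)
  have Av: "A *v v = ctrans H *v (Ri *v (H *v v))" for v
    by (simp add: A_def matrix_vector_mul_assoc matrix_mul_assoc)
  have indep: "u = 0" if "H *v u = 0" for u :: "complex^2"
  proof -
    have e: "u$1 *s h0 + u$2 *s h1 = 0" using that unfolding H_def H_mult .
    have "hip h0 (u$1 *s h0 + u$2 *s h1) = 0" "hip h1 (u$1 *s h0 + u$2 *s h1) = 0"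
      unfolding e by (simp_all add: hip_zero_r)
    then have a: "u$1 + u$2 * \<rho> = 0" "u$1 * cnj \<rho> + u$2 = 0"
      unfolding hip_add_r hip_scale_r h00 h10 rho[symmetric] by simp_all
    have "u$1 * complex_of_real c2 = u$1 - u$1 * (cnj \<rho> * \<rho>)" unfolding rr by (simp add: algebra_simps)
    also have "\<dots> = u$1 + u$2 * \<rho>" using a(2) by algebra
    also have "\<dots> = 0" using a(1) .
    finally have "u$1 = 0" using c2(2) by simp
    moreover then have "u$2 = 0" using a(2) by simp
    ultimately show "u = 0" by (simp add: vec_eq_iff forall_2)
  qed
  have Ainj: "u = 0" if "A *v u = 0" for u
  proof -
    define y where "y = Ri *v (H *v u)"
    have Ry: "R *v y = H *v u" unfolding y_def RRiv ..
    have hy: "ctrans H *v y = 0" using that unfolding Av y_def .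
    have "(ctrans H *v y)$1 = 0" "(ctrans H *v y)$2 = 0" using hy by simp_all
    then have "hip h0 y = 0" "hip h1 y = 0" unfolding H_def HH_mult by simp_all
    then have "hip y h0 = 0" "hip y h1 = 0" using hip_cnj[of h0 y] hip_cnj[of h1 y] by simp_all
    then have "hip y (R *v y) = 0" unfolding Ry H_def H_mult hip_add_r hip_scale_r by simp
    then have "y = 0" using Rinj by simp
    then have "H *v u = 0" using Ry by simp
    then show ?thesis using indep by blast
  qed
  have AAi: "A ** matrix_inv A = mat 1" using inv_props[of A] Ainj by blast
  define u where "u = matrix_inv A *v e1"
  define w where "w = Ri *v (H *v u)"
  have wz: "w_ZF s0 s1 c1 sn h0 h1 = w"
    unfolding w_ZF_def Let_def R_def[symmetric] Ri_def[symmetric] H_def[symmetric] A_def[symmetric]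
      w_def u_def by (simp add: matrix_vector_mul_assoc matrix_mul_assoc)
  have "ctrans H *v w = A *v u" unfolding w_def Av ..
  also have "\<dots> = e1" unfolding u_def by (simp add: matrix_vector_mul_assoc AAi)
  finally have hw': "ctrans H *v w = e1" .
  have "(ctrans H *v w)$1 = 1" "(ctrans H *v w)$2 = 0" unfolding hw' e1_def by simp_all
  then have hw: "hip h0 w = 1" "hip h1 w = 0" unfolding H_def HH_mult by simp_all
  have "R *v w = H *v u" unfolding w_def RRiv ..
  then have "complex_of_real (s0\<^sup>2) *s h0 + c1 *s h1 + complex_of_real (sn\<^sup>2) *s w = u$1 *s h0 + u$2 *s h1"
    unfolding R_def Rcov_mult hw H_def H_mult by simp
  then have "complex_of_real (sn\<^sup>2) *s w = (u$1 - complex_of_real (s0\<^sup>2)) *s h0 + (u$2 - c1) *s h1"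
    unfolding vec_eq_iff by (simp add: algebra_simps)
  then have weq: "complex_of_real (sn\<^sup>2) *s w = (u$1 - complex_of_real (s0\<^sup>2)) *s h0 + (u$2 - c1) *s h1" .
  have k0: "complex_of_real (sn\<^sup>2) \<noteq> 0" using pos(3) by simp
  have "w = inverse (complex_of_real (sn\<^sup>2)) *s (complex_of_real (sn\<^sup>2) *s w)"
    using k0 by (simp add: vector_smult_assoc)
  also have "\<dots> = inverse (complex_of_real (sn\<^sup>2)) *s ((u$1 - complex_of_real (s0\<^sup>2)) *s h0 + (u$2 - c1) *s h1)"
    unfolding weq ..
  also have "\<dots> = (inverse (complex_of_real (sn\<^sup>2)) * (u$1 - complex_of_real (s0\<^sup>2))) *s h0
      + (inverse (complex_of_real (sn\<^sup>2)) * (u$2 - c1)) *s h1"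
    by (simp only: vector_add_ldistrib vector_smult_assoc)
  finally obtain \<alpha> \<beta> where we: "w = \<alpha> *s h0 + \<beta> *s h1" by blast
  have ab: "\<alpha> + \<beta> * \<rho> = 1" "\<alpha> * cnj \<rho> + \<beta> = 0"
    using hw unfolding we hip_add_r hip_scale_r h00 h10 rho[symmetric] by simp_all
  have "\<alpha> * complex_of_real c2 = \<alpha> - \<alpha> * (cnj \<rho> * \<rho>)" unfolding rr by (simp add: algebra_simps)
  also have "\<dots> = \<alpha> + \<beta> * \<rho>" using ab(2) by algebra
  finally have ac: "\<alpha> = complex_of_real (1 / c2)" using ab(1) c2(2) by (simp add: field_simps)
  have "complex_of_real ((norm w)\<^sup>2) = hip w w" by (simp add: hip_self)
  also have "\<dots> = cnj \<alpha>"
  proof -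
    have "hip v w = cnj \<alpha> * hip h0 w + cnj \<beta> * hip h1 w"
      if "v = \<alpha> *s h0 + \<beta> *s h1" for v using that by (simp only: hip_add_l hip_scale_l)
    from this[OF we] show ?thesis unfolding hw by simp
  qed
  finally have "(norm w)\<^sup>2 = 1 / c2" unfolding ac by (metis complex_cnj_complex_of_real of_real_eq_iff)
  then show ?thesis unfolding wz J_formula[OF hw(1)] hw(2) by simp
qed



lemma cmod_sub_real_sq: "(cmod (z - complex_of_real r))\<^sup>2 = (cmod z)\<^sup>2 - 2 * r * Re z + r\<^sup>2"
  by (simp only: cmod_power2) (simp add: power2_eq_square algebra_simps)

lemma final_alg:
  fixes S C t m s sn s1 G \<phi>z \<phi>c :: real and \<rho> c1 x \<delta>2 :: complex
  assumes C: "C > 0" and t: "t = S / C"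
    and rho: "\<rho> = complex_of_real S * cis \<phi>z" and c1: "c1 = complex_of_real m * cis \<phi>c"
    and G: "G = s * C\<^sup>2 + sn\<^sup>2" "G > 0"
    and x: "x = - (complex_of_real s * cnj \<rho> + c1) / complex_of_real G"
    and d2: "\<delta>2 = complex_of_real (sn\<^sup>2 * t) - complex_of_real (m * C) * cis (\<phi>c + \<phi>z)"
    and d1: "\<delta>1 = sn\<^sup>2 * t - m * C * cos (\<phi>c + \<phi>z)"
  shows "s1\<^sup>2 * (cmod (cnj \<rho> + x * complex_of_real (C\<^sup>2)))\<^sup>2 + sn\<^sup>2 * (1 + (cmod x)\<^sup>2 * C\<^sup>2)
       = (cmod \<delta>2)\<^sup>2 * (s1\<^sup>2 * C\<^sup>2 + sn\<^sup>2) / G\<^sup>2 - 2 * sn\<^sup>2 * \<delta>1 * t / G + sn\<^sup>2 * (t\<^sup>2 + 1)"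
proof -
  have G0: "complex_of_real G \<noteq> 0" using G(2) by simp
  have C0: "complex_of_real C \<noteq> 0" using C by simp
  have cc: "cis (-\<phi>z) * cis (\<phi>c + \<phi>z) = cis \<phi>c" by (simp add: cis_mult)
  have Gx: "complex_of_real G * x = - (complex_of_real s * cnj \<rho> + c1)" using G0 x by simp
  have St: "complex_of_real S = complex_of_real C * complex_of_real t" using t C by simp
  have "complex_of_real G * (cnj \<rho> + x * complex_of_real (C\<^sup>2))
      = complex_of_real G * cnj \<rho> + (complex_of_real G * x) * complex_of_real (C\<^sup>2)"
    by (simp add: algebra_simps)
  also have "\<dots> = cis (-\<phi>z) * (complex_of_real C * \<delta>2)"
    unfolding Gx unfolding G(1) rho c1 d2 cc[symmetric] St
    by (simp add: cis_cnj algebra_simps power2_eq_square)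
  finally have e1: "complex_of_real G * (cnj \<rho> + x * complex_of_real (C\<^sup>2)) = cis (-\<phi>z) * (complex_of_real C * \<delta>2)" .
  have "G * cmod (cnj \<rho> + x * complex_of_real (C\<^sup>2)) = C * cmod \<delta>2"
    using arg_cong[OF e1, of cmod] G(2) C by (simp add: norm_mult)
  then have n1: "cmod (cnj \<rho> + x * complex_of_real (C\<^sup>2)) = C * cmod \<delta>2 / G"
    using G(2) by (simp add: field_simps)
  have e2: "complex_of_real C * (complex_of_real G * x) = cis (-\<phi>z) * (\<delta>2 - complex_of_real (t * G))"
    unfolding Gx unfolding G(1) rho c1 d2 cc[symmetric] St
    by (simp add: cis_cnj algebra_simps power2_eq_square)
  have "cmod (complex_of_real C * (complex_of_real G * x)) = cmod (cis (-\<phi>z) * (\<delta>2 - complex_of_real (t * G)))"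
    by (simp only: e2)
  then have "C * (G * cmod x) = cmod (\<delta>2 - complex_of_real (t * G))"
    using G(2) C by (simp add: norm_mult)
  then have n2: "(cmod x)\<^sup>2 * C\<^sup>2 = (cmod (\<delta>2 - complex_of_real (t * G)))\<^sup>2 / G\<^sup>2"
    using G(2) by (simp add: field_simps power2_eq_square) (metis mult.commute mult.left_commute)
  have re: "Re \<delta>2 = \<delta>1" unfolding d2 d1 by simp
  show ?thesis unfolding n1 n2 cmod_sub_real_sq re
    using G(2) C by (simp add: field_simps power2_eq_square)
qed


lemma quad_diff: "((P::real)*b^2 - 2*Q*b + K) - (P*a^2 - 2*Q*a + K) = (b - a) * (P*(a+b) - 2*Q)"
  by (simp add: power2_eq_square algebra_simps)

theorem theorem3:
  fixes h0 h1 :: "complex ^ 'n"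
    and \<sigma>0 \<sigma>1 \<sigma>n \<tau> \<phi>z \<phi>c :: real
    and c1 :: complex
  assumes N2: "CARD('n) \<ge> 2"
    and nh0: "norm h0 = 1" and nh1: "norm h1 = 1"
    and corr: "hip h0 h1 = complex_of_real (sin \<tau>) * cis \<phi>z"
    and tau: "0 \<le> \<tau>" "\<tau> < pi / 2"
    and phiz: "0 \<le> \<phi>z" "\<phi>z < 2 * pi"
    and sig: "\<sigma>0 > 0" "\<sigma>1 > 0" "\<sigma>n > 0"
    and c1: "c1 = complex_of_real (cmod c1) * cis \<phi>c" "cmod c1 \<le> \<sigma>0 * \<sigma>1"
    and phic: "0 \<le> \<phi>c" "\<phi>c < 2 * pi"
  defines "M \<equiv> MSE \<sigma>0 \<sigma>1 c1 \<sigma>n h0 h1"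
    and "g \<equiv> (\<lambda>l::real. l * (cos \<tau>)\<^sup>2 + \<sigma>1\<^sup>2 * (cos \<tau>)\<^sup>2 + \<sigma>n\<^sup>2)"
    and "\<delta>1 \<equiv> \<sigma>n\<^sup>2 * tan \<tau> - cmod c1 * cos \<tau> * cos (\<phi>c + \<phi>z)"
    and "\<delta>2 \<equiv> complex_of_real (\<sigma>n\<^sup>2 * tan \<tau>)
                - complex_of_real (cmod c1 * cos \<tau>) * cis (\<phi>c + \<phi>z)"
    and "\<gamma> \<equiv> (\<sigma>n\<^sup>2 * tan \<tau> - cmod c1 * cos \<tau> * cos (\<phi>c + \<phi>z)) * \<sigma>n\<^sup>2 * tan \<tau>
              / (cmod (complex_of_real (\<sigma>n\<^sup>2 * tan \<tau>)
                   - complex_of_real (cmod c1 * cos \<tau>) * cis (\<phi>c + \<phi>z)))\<^sup>2"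
  shows "(\<forall>l\<ge>0. M l = (cmod \<delta>2)\<^sup>2 * (\<sigma>1\<^sup>2 * (cos \<tau>)\<^sup>2 + \<sigma>n\<^sup>2) / (g l)\<^sup>2
                     - 2 * \<sigma>n\<^sup>2 * \<delta>1 * tan \<tau> / g l + \<sigma>n\<^sup>2 * ((tan \<tau>)\<^sup>2 + 1))
    \<and> (\<delta>2 = 0 \<longrightarrow> \<delta>1 = 0 \<and> (\<forall>l\<ge>0. M l = \<sigma>n\<^sup>2 * ((tan \<tau>)\<^sup>2 + 1)))
    \<and> (\<delta>2 \<noteq> 0 \<longrightarrow>
         ((\<gamma> \<le> 0 \<longleftrightarrow> \<delta>1 * tan \<tau> \<le> 0)
          \<and> (\<gamma> \<le> 0 \<longrightarrow>
               (\<forall>x y. 0 \<le> x \<longrightarrow> x \<le> y \<longrightarrow> M y \<le> M x)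
               \<and> (M \<longlongrightarrow> J_MSE \<sigma>0 \<sigma>1 c1 \<sigma>n h0 h1 (w_ZF \<sigma>0 \<sigma>1 c1 \<sigma>n h0 h1)) at_top
               \<and> (INF l\<in>{0..}. M l) = J_MSE \<sigma>0 \<sigma>1 c1 \<sigma>n h0 h1 (w_ZF \<sigma>0 \<sigma>1 c1 \<sigma>n h0 h1))
          \<and> (\<gamma> \<ge> 1 \<longrightarrow>
               (\<forall>x y. 0 \<le> x \<longrightarrow> x \<le> y \<longrightarrow> M x \<le> M y)
               \<and> (\<forall>l\<ge>0. M 0 \<le> M l))
          \<and> (0 < \<gamma> \<and> \<gamma> < 1 \<longrightarrow>
               (let lopt = (\<sigma>1\<^sup>2 * (cos \<tau>)\<^sup>2 + \<sigma>n\<^sup>2) / (cos \<tau>)\<^sup>2 * ((1 - \<gamma>) / \<gamma>)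
                in lopt > 0 \<and> (\<forall>l\<ge>0. M lopt \<le> M l)))))"
  proof -
  define C where "C = cos \<tau>"
  define S where "S = sin \<tau>"
  define t where "t = tan \<tau>"
  have Cp: "C > 0" unfolding C_def using tau by (intro cos_gt_zero_pi) auto
  have Sn: "S \<ge> 0" unfolding S_def using tau by (intro sin_ge_zero) auto
  have SC: "S\<^sup>2 + C\<^sup>2 = 1" unfolding S_def C_def by simp
  have tSC: "t = S / C" unfolding t_def S_def C_def tan_def ..
  define \<rho> where "\<rho> = hip h0 h1"
  have rho: "\<rho> = complex_of_real S * cis \<phi>z" unfolding \<rho>_def S_def corr ..
  have cr: "cmod \<rho> = S" using Sn by (simp add: rho norm_mult)
  have c2: "C\<^sup>2 = 1 - (cmod \<rho>)\<^sup>2" using SC cr by simp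
  have c2p: "C\<^sup>2 > 0" using Cp by simp
  have c1b: "cmod c1 \<le> \<sigma>0 * \<sigma>1" using c1(2) .
  define g0 where "g0 = \<sigma>1\<^sup>2 * C\<^sup>2 + \<sigma>n\<^sup>2"
  have g0p: "g0 > 0" unfolding g0_def using sig c2p by (simp add: add_nonneg_pos)
  have gl: "g l = l * C\<^sup>2 + g0" for l unfolding g_def g0_def C_def by simp
  have gl2: "g l = (\<sigma>1\<^sup>2 + l) * C\<^sup>2 + \<sigma>n\<^sup>2" for l unfolding gl g0_def by (simp add: algebra_simps)
  have gge: "g l \<ge> g0" if "l \<ge> 0" for l using that c2p by (simp add: gl)
  have gpos: "g l > 0" if "l \<ge> 0" for l using gge[OF that] g0p by simp
  have d2: "\<delta>2 = complex_of_real (\<sigma>n\<^sup>2 * t) - complex_of_real (cmod c1 * C) * cis (\<phi>c + \<phi>z)"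
    unfolding \<delta>2_def t_def C_def ..
  have d1: "\<delta>1 = \<sigma>n\<^sup>2 * t - cmod c1 * C * cos (\<phi>c + \<phi>z)"
    unfolding \<delta>1_def t_def C_def ..
  have F: "M l = (cmod \<delta>2)\<^sup>2 * g0 / (g l)\<^sup>2 - 2 * \<sigma>n\<^sup>2 * \<delta>1 * t / g l + \<sigma>n\<^sup>2 * (t\<^sup>2 + 1)"
    if l: "l \<ge> 0" for l
  proof -
    define x where "x = - (complex_of_real (\<sigma>1\<^sup>2 + l) * cnj \<rho> + c1) / complex_of_real ((\<sigma>1\<^sup>2 + l) * C\<^sup>2 + \<sigma>n\<^sup>2)"
    have Gp: "(\<sigma>1\<^sup>2 + l) * C\<^sup>2 + \<sigma>n\<^sup>2 > 0" using gpos[OF l] unfolding gl2 .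
    have "M l = \<sigma>1\<^sup>2 * (cmod (cnj \<rho> + x * complex_of_real (C\<^sup>2)))\<^sup>2 + \<sigma>n\<^sup>2 * (1 + (cmod x)\<^sup>2 * C\<^sup>2)"
      unfolding M_def using RZF_eq(2)[OF nh0 nh1 c1b l sig \<rho>_def c2 c2p x_def] .
    also have "\<dots> = (cmod \<delta>2)\<^sup>2 * (\<sigma>1\<^sup>2 * C\<^sup>2 + \<sigma>n\<^sup>2) / ((\<sigma>1\<^sup>2 + l) * C\<^sup>2 + \<sigma>n\<^sup>2)\<^sup>2
        - 2 * \<sigma>n\<^sup>2 * \<delta>1 * t / ((\<sigma>1\<^sup>2 + l) * C\<^sup>2 + \<sigma>n\<^sup>2) + \<sigma>n\<^sup>2 * (t\<^sup>2 + 1)"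
      by (rule final_alg[OF Cp tSC rho c1(1) refl Gp x_def d2 d1])
    finally show ?thesis unfolding gl2 g0_def .
  qed
  have P1: "\<forall>l\<ge>0. M l = (cmod \<delta>2)\<^sup>2 * (\<sigma>1\<^sup>2 * C\<^sup>2 + \<sigma>n\<^sup>2) / (g l)\<^sup>2
                     - 2 * \<sigma>n\<^sup>2 * \<delta>1 * t / g l + \<sigma>n\<^sup>2 * (t\<^sup>2 + 1)"
    using F unfolding g0_def by blast
  have re: "Re \<delta>2 = \<delta>1" unfolding d2 d1 by simp
  have P2: "\<delta>2 = 0 \<longrightarrow> \<delta>1 = 0 \<and> (\<forall>l\<ge>0. M l = \<sigma>n\<^sup>2 * (t\<^sup>2 + 1))"
  proof
    assume z: "\<delta>2 = 0"
    then have "\<delta>1 = 0" using re by simp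
    then show "\<delta>1 = 0 \<and> (\<forall>l\<ge>0. M l = \<sigma>n\<^sup>2 * (t\<^sup>2 + 1))" using F z by simp
  qed
  have JZ: "J_MSE \<sigma>0 \<sigma>1 c1 \<sigma>n h0 h1 (w_ZF \<sigma>0 \<sigma>1 c1 \<sigma>n h0 h1) = \<sigma>n\<^sup>2 * (t\<^sup>2 + 1)"
  proof -
    have "J_MSE \<sigma>0 \<sigma>1 c1 \<sigma>n h0 h1 (w_ZF \<sigma>0 \<sigma>1 c1 \<sigma>n h0 h1) = \<sigma>n\<^sup>2 / C\<^sup>2"
      using ZF_val[OF nh0 nh1 c1b sig \<rho>_def c2 c2p] .
    also have "\<dots> = \<sigma>n\<^sup>2 * (t\<^sup>2 + 1)" unfolding tSC using Cp SC
      by (simp add: field_simps power2_eq_square)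
    finally show ?thesis .
  qed
  have P3: "\<delta>2 \<noteq> 0 \<longrightarrow>
         ((\<gamma> \<le> 0 \<longleftrightarrow> \<delta>1 * t \<le> 0)
          \<and> (\<gamma> \<le> 0 \<longrightarrow>
               (\<forall>x y. 0 \<le> x \<longrightarrow> x \<le> y \<longrightarrow> M y \<le> M x)
               \<and> (M \<longlongrightarrow> J_MSE \<sigma>0 \<sigma>1 c1 \<sigma>n h0 h1 (w_ZF \<sigma>0 \<sigma>1 c1 \<sigma>n h0 h1)) at_top
               \<and> (INF l\<in>{0..}. M l) = J_MSE \<sigma>0 \<sigma>1 c1 \<sigma>n h0 h1 (w_ZF \<sigma>0 \<sigma>1 c1 \<sigma>n h0 h1))
          \<and> (\<gamma> \<ge> 1 \<longrightarrow>
               (\<forall>x y. 0 \<le> x \<longrightarrow> x \<le> y \<longrightarrow> M x \<le> M y)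
               \<and> (\<forall>l\<ge>0. M 0 \<le> M l))
          \<and> (0 < \<gamma> \<and> \<gamma> < 1 \<longrightarrow>
               (let lopt = (\<sigma>1\<^sup>2 * C\<^sup>2 + \<sigma>n\<^sup>2) / C\<^sup>2 * ((1 - \<gamma>) / \<gamma>)
                in lopt > 0 \<and> (\<forall>l\<ge>0. M lopt \<le> M l))))"
  proof
    assume nz: "\<delta>2 \<noteq> 0"
    define D where "D = (cmod \<delta>2)\<^sup>2"
    have Dp: "D > 0" unfolding D_def using nz by simp
    define P where "P = D * g0"
    define Q where "Q = \<sigma>n\<^sup>2 * \<delta>1 * t"
    define K where "K = \<sigma>n\<^sup>2 * (t\<^sup>2 + 1)"
    define f where "f = (\<lambda>y. P * y\<^sup>2 - 2 * Q * y + K)"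
    have Pp: "P > 0" unfolding P_def using Dp g0p by simp
    have Mf: "M l = f (inverse (g l))" if "l \<ge> 0" for l
      unfolding F[OF that] f_def P_def Q_def K_def D_def
      by (simp add: divide_inverse power_inverse algebra_simps)
    have gam: "\<gamma> = Q / D"
      unfolding \<gamma>_def Q_def D_def \<delta>2_def \<delta>1_def t_def by (simp add: ac_simps)
    have QD: "Q = \<gamma> * D" using gam Dp by simp
    have fd: "f b - f a = (b - a) * (P * (a + b) - 2 * Q)" for a b
      unfolding f_def by (rule quad_diff)
    have ig: "0 < inverse (g y) \<and> inverse (g y) \<le> inverse (g x) \<and> inverse (g x) \<le> inverse g0"
      if "0 \<le> x" "x \<le> y" for x y
    proof -
      have "g x \<le> g y" using that c2p by (simp add: gl mult_right_mono)
      then show ?thesis using gpos[of x] gpos[of y] gge[of x] that g0p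
        by (simp add: le_imp_inverse_le)
    qed
    show "(\<gamma> \<le> 0 \<longleftrightarrow> \<delta>1 * t \<le> 0)
          \<and> (\<gamma> \<le> 0 \<longrightarrow>
               (\<forall>x y. 0 \<le> x \<longrightarrow> x \<le> y \<longrightarrow> M y \<le> M x)
               \<and> (M \<longlongrightarrow> J_MSE \<sigma>0 \<sigma>1 c1 \<sigma>n h0 h1 (w_ZF \<sigma>0 \<sigma>1 c1 \<sigma>n h0 h1)) at_top
               \<and> (INF l\<in>{0..}. M l) = J_MSE \<sigma>0 \<sigma>1 c1 \<sigma>n h0 h1 (w_ZF \<sigma>0 \<sigma>1 c1 \<sigma>n h0 h1))
          \<and> (\<gamma> \<ge> 1 \<longrightarrow>
               (\<forall>x y. 0 \<le> x \<longrightarrow> x \<le> y \<longrightarrow> M x \<le> M y)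
               \<and> (\<forall>l\<ge>0. M 0 \<le> M l))
          \<and> (0 < \<gamma> \<and> \<gamma> < 1 \<longrightarrow>
               (let lopt = (\<sigma>1\<^sup>2 * C\<^sup>2 + \<sigma>n\<^sup>2) / C\<^sup>2 * ((1 - \<gamma>) / \<gamma>)
                in lopt > 0 \<and> (\<forall>l\<ge>0. M lopt \<le> M l)))"
    proof (intro conjI impI allI)
      have "\<gamma> = (\<sigma>n\<^sup>2 / D) * (\<delta>1 * t)" unfolding gam Q_def by (simp add: field_simps)
      moreover have "\<sigma>n\<^sup>2 / D > 0" using Dp sig by simp
      ultimately show "\<gamma> \<le> 0 \<longleftrightarrow> \<delta>1 * t \<le> 0"
        using mult_le_cancel_left_pos[of "\<sigma>n\<^sup>2 / D" "\<delta>1 * t" 0] by simp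
    next
      fix x y :: real assume g: "\<gamma> \<le> 0" and xy: "0 \<le> x" "x \<le> y"
      have Q0: "Q \<le> 0" using QD g Dp by (simp add: mult_nonpos_nonneg)
      have "0 \<le> (inverse (g x) - inverse (g y)) * (P * (inverse (g y) + inverse (g x)) - 2 * Q)"
      proof (intro mult_nonneg_nonneg)
        show "0 \<le> inverse (g x) - inverse (g y)" using ig[OF xy] by simp
        have i1: "0 < inverse (g y)" using ig[OF xy] by simp
        have i2: "0 < inverse (g x)" using i1 ig[OF xy] by linarith
        have "0 \<le> P * (inverse (g y) + inverse (g x))"
          using Pp i1 i2 by (intro mult_nonneg_nonneg) auto
        then show "0 \<le> P * (inverse (g y) + inverse (g x)) - 2 * Q" using Q0 by simp
      qed
      moreover have "0 \<le> y" using xy by simp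
      ultimately show "M y \<le> M x" unfolding Mf[OF xy(1)]
        using Mf[of y] fd[where a="inverse (g y)" and b="inverse (g x)"] by simp
    next
      assume g: "\<gamma> \<le> 0"
      have Q0: "Q \<le> 0" using QD g Dp by (simp add: mult_nonpos_nonneg)
      have lim_g: "filterlim g at_top at_top"
      proof -
        have "filterlim (\<lambda>l. g0 + C\<^sup>2 * l) at_top at_top"
          by (rule filterlim_tendsto_add_at_top[OF tendsto_const
                filterlim_tendsto_pos_mult_at_top[OF tendsto_const c2p filterlim_ident]])
        moreover have "(\<lambda>l. g0 + C\<^sup>2 * l) = g" by (rule ext) (simp add: gl algebra_simps)
        ultimately show ?thesis by simp
      qed
      have "((\<lambda>l. f (inverse (g l))) \<longlongrightarrow> f 0) at_top"
        unfolding f_def by (intro tendsto_intros tendsto_inverse_0_at_top lim_g)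
      moreover have "f 0 = K" unfolding f_def by simp
      moreover have "eventually (\<lambda>l. f (inverse (g l)) = M l) at_top"
        using eventually_ge_at_top[of 0] by eventually_elim (simp add: Mf)
      ultimately have lim: "(M \<longlongrightarrow> K) at_top" using tendsto_cong by fastforce
      then show "(M \<longlongrightarrow> J_MSE \<sigma>0 \<sigma>1 c1 \<sigma>n h0 h1 (w_ZF \<sigma>0 \<sigma>1 c1 \<sigma>n h0 h1)) at_top"
        unfolding JZ K_def .
      have lb: "K \<le> M l" if "l \<ge> 0" for l
      proof -
        have "0 < inverse (g l)" using gpos[OF that] by simp
        moreover have "0 \<le> P * (inverse (g l))\<^sup>2" using Pp by simp
        moreover have "Q * inverse (g l) \<le> 0" using Q0 \<open>0 < inverse (g l)\<close>
          by (simp add: mult_nonpos_nonneg)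
        ultimately have "0 \<le> P * (inverse (g l))\<^sup>2 - 2 * Q * inverse (g l)" by simp
        then show ?thesis unfolding Mf[OF that] f_def by simp
      qed
      have bdd: "bdd_below (M ` {0..})" by (rule bdd_belowI2[where m=K]) (simp add: lb)
      have "(INF l\<in>{0..}. M l) \<le> K"
      proof (rule tendsto_lowerbound[OF lim])
        show "\<forall>\<^sub>F l in at_top. (INF l\<in>{0..}. M l) \<le> M l"
          using eventually_ge_at_top[of 0] by eventually_elim (auto intro: cINF_lower bdd)
      qed simp
      moreover have "K \<le> (INF l\<in>{0..}. M l)"
        by (rule cINF_greatest) (auto intro: lb)
      ultimately show "(INF l\<in>{0..}. M l) = J_MSE \<sigma>0 \<sigma>1 c1 \<sigma>n h0 h1 (w_ZF \<sigma>0 \<sigma>1 c1 \<sigma>n h0 h1)"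
        unfolding JZ K_def[symmetric] by simp
    next
      fix x y :: real assume g: "1 \<le> \<gamma>" and xy: "0 \<le> x" "x \<le> y"
      have QD1: "D \<le> Q" using QD g Dp by (simp add: mult_right_mono)
      define a where "a = inverse (g y)"
      define b where "b = inverse (g x)"
      have ab: "0 < a" "a \<le> b" "b \<le> inverse g0" using ig[OF xy] unfolding a_def b_def by auto
      have "P * (a + b) \<le> P * (2 * inverse g0)" using ab Pp by (intro mult_left_mono) auto
      also have "\<dots> = 2 * D" unfolding P_def using g0p by (simp add: field_simps)
      finally have "P * (a + b) - 2 * Q \<le> 0" using QD1 by simp
      then have "0 \<le> (a - b) * (P * (b + a) - 2 * Q)" using ab
        by (intro mult_nonpos_nonpos) (auto simp: add.commute)
      moreover have "0 \<le> y" using xy by simp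
      ultimately show "M x \<le> M y" unfolding Mf[OF xy(1)] b_def[symmetric]
        using Mf[of y] fd[where a=b and b=a] unfolding a_def[symmetric] by simp
    next
      fix l :: real assume g: "1 \<le> \<gamma>" and l: "0 \<le> l"
      have QD1: "D \<le> Q" using QD g Dp by (simp add: mult_right_mono)
      define a where "a = inverse (g l)"
      define b where "b = inverse (g 0)"
      have ab: "0 < a" "a \<le> b" "b \<le> inverse g0" using ig[OF order_refl l] unfolding a_def b_def by auto
      have "P * (a + b) \<le> P * (2 * inverse g0)" using ab Pp by (intro mult_left_mono) auto
      also have "\<dots> = 2 * D" unfolding P_def using g0p by (simp add: field_simps)
      finally have "P * (a + b) - 2 * Q \<le> 0" using QD1 by simp
      then have "0 \<le> (a - b) * (P * (b + a) - 2 * Q)" using ab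
        by (intro mult_nonpos_nonpos) (auto simp: add.commute)
      then show "M 0 \<le> M l" unfolding Mf[OF order_refl] Mf[OF l] a_def[symmetric] b_def[symmetric]
        using fd[where a=b and b=a] by simp
    next
      assume g: "0 < \<gamma> \<and> \<gamma> < 1"
      define lopt where "lopt = (\<sigma>1\<^sup>2 * C\<^sup>2 + \<sigma>n\<^sup>2) / C\<^sup>2 * ((1 - \<gamma>) / \<gamma>)"
      have lp: "lopt > 0" unfolding lopt_def using g g0p c2p unfolding g0_def[symmetric]
        by (intro mult_pos_pos divide_pos_pos) auto
      have glo: "g lopt = g0 / \<gamma>" unfolding gl lopt_def g0_def[symmetric] using g c2p
        by (simp add: field_simps)
      define ys where "ys = \<gamma> / g0"
      have ysl: "inverse (g lopt) = ys" unfolding glo ys_def by simp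
      have Pys: "P * ys = Q" unfolding P_def ys_def QD using g0p by simp
      have "M lopt \<le> M l" if l: "l \<ge> 0" for l
      proof -
        have "f (inverse (g l)) - f ys = P * (inverse (g l) - ys)\<^sup>2"
          unfolding fd Pys[symmetric] by (simp add: power2_eq_square algebra_simps)
        moreover have "0 \<le> P * (inverse (g l) - ys)\<^sup>2" using Pp by simp
        ultimately show ?thesis unfolding Mf[OF l] Mf[OF less_imp_le[OF lp]] ysl by simp
      qed
      then show "let lopt = (\<sigma>1\<^sup>2 * C\<^sup>2 + \<sigma>n\<^sup>2) / C\<^sup>2 * ((1 - \<gamma>) / \<gamma>)
                in lopt > 0 \<and> (\<forall>l\<ge>0. M lopt \<le> M l)"
        unfolding Let_def lopt_def[symmetric] using lp by blast
    qed
  qed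
  show ?thesis unfolding C_def[symmetric] t_def[symmetric] using P1 P2 P3 by blast
qed

end
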